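(* Let $L$ be a precompact Hausdorff co-Heyting algebra, identified with its image in $\widehat L$. Then: (1) $L$ and $\widehat L$ have the same completely meet irreducible elements; (2) the maps $x\mapsto x^{\vee}=\bigwedge\{y\in L: y\not\le x\}$ and $x\mapsto x^{\wedge}=\bigvee\{y\in L: x\not\le y\}$ are well defined and are mutually inverse, order preserving bijections between $\mathcal I^{!\wedge}(L)$ and $\mathcal I^{!\vee}(L)$ (with $x\mapsto x^\vee$ going from $\mathcal I^{!\wedge}(L)$ to $\mathcal I^{!\vee}(L)$ and $x\mapsto x^\wedge$ going back); (3) for every $x\in\mathcal I^{!\wedge}(L)$, the cofoundation rank of $x$ in $\mathcal I^{!\wedge}(L)$ is finite; (4) $\mathcal I^{!\wedge}(L)$ satisfies the ascending chain condition; (5) every $a\in L$ is the complete meet of $\{x\in\mathcal I^{!\wedge}(L): a\le x\}$.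
   Context: A co-Heyting algebra is a bounded distributive lattice $(L,0,1,\vee,\wedge)$ such that $a-b=\min\{c\in L: a\le b\vee c\}$ exists for all $a,b$. For an ideal $I$, $L/I$ is the quotient by $a\equiv_I b\iff(a-b)\vee(b-a)\in I$. $\operatorname{Spec}L$ is the set of prime filters ordered by inclusion; height = foundation rank there; $\operatorname{codim}_La=\min\{\operatorname{height}\mathfrak p: a\in\mathfrak p\}$ ($+\infty$ if none); $dL=\{a:\operatorname{codim}_La\ge d\}$ is an ideal. $L$ is Hausdorff if every nonzero element has finite codimension; precompact if $L/dL$ is finite for every positive integer $d$. $\widehat L$ is the projective limit of the quotients $L/dL$ under the canonical surjections $L/(d+1)L\to L/dL$, with $L$ embedded diagonally. $x\ne0$ is completely join irreducible if $x\le\bigvee A$ implies $x\le a$ for some $a\in A$; $x\ne1$ is completely meet irreducible if $\bigwedge A\le x$ implies $a\le x$ for some $a\in A$. $\mathcal I^{!\vee}(L)$, $\mathcal I^{!\wedge}(L)$ denote the sets of completely join, resp. meet, irreducible elements. Cofoundation rank in an ordered set is the foundation rank for the reverse order. *)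

theory Defs
  imports Main
begin

definition is_cdiff :: "'a::{distrib_lattice,bounded_lattice} \<Rightarrow> 'a \<Rightarrow> 'a \<Rightarrow> bool" where
  "is_cdiff a b c \<longleftrightarrow> a \<le> sup b c \<and> (\<forall>c'. a \<le> sup b c' \<longrightarrow> c \<le> c')"

definition coheyting :: "'a::{distrib_lattice,bounded_lattice} itself \<Rightarrow> bool" where
  "coheyting _ \<longleftrightarrow> (\<forall>a b::'a. \<exists>c. is_cdiff a b c)"

definition cdiff :: "'a::{distrib_lattice,bounded_lattice} \<Rightarrow> 'a \<Rightarrow> 'a" where
  "cdiff a b = (THE c. is_cdiff a b c)"

definition qrel :: "'a::{distrib_lattice,bounded_lattice} set \<Rightarrow> ('a \<times> 'a) set" where
  "qrel I = {(a, b). sup (cdiff a b) (cdiff b a) \<in> I}"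

definition prime_filter :: "'a::{distrib_lattice,bounded_lattice} set \<Rightarrow> bool" where
  "prime_filter F \<longleftrightarrow> top \<in> F \<and> bot \<notin> F
     \<and> (\<forall>a b. a \<in> F \<longrightarrow> a \<le> b \<longrightarrow> b \<in> F)
     \<and> (\<forall>a b. a \<in> F \<longrightarrow> b \<in> F \<longrightarrow> inf a b \<in> F)
     \<and> (\<forall>a b. sup a b \<in> F \<longrightarrow> a \<in> F \<or> b \<in> F)"

definition Spec :: "'a::{distrib_lattice,bounded_lattice} set set" where
  "Spec = {F. prime_filter F}"

text \<open>Foundation rank: rank_le P lt x n means that x has foundation rank \<le> n
  in the strictly ordered set (P, lt).  (Foundation rank of x is the supremum of
  rank(y)+1 over y < x; it is a natural number \<le> n iff rank_le P lt x n.)\<close>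
fun rank_le :: "'b set \<Rightarrow> ('b \<Rightarrow> 'b \<Rightarrow> bool) \<Rightarrow> 'b \<Rightarrow> nat \<Rightarrow> bool" where
  "rank_le P lt x 0 \<longleftrightarrow> (\<forall>y\<in>P. \<not> lt y x)"
| "rank_le P lt x (Suc n) \<longleftrightarrow> (\<forall>y\<in>P. lt y x \<longrightarrow> rank_le P lt y n)"

definition finite_foundation_rank :: "'b set \<Rightarrow> ('b \<Rightarrow> 'b \<Rightarrow> bool) \<Rightarrow> 'b \<Rightarrow> bool" where
  "finite_foundation_rank P lt x \<longleftrightarrow> (\<exists>n. rank_le P lt x n)"

definition finite_cofoundation_rank :: "'b set \<Rightarrow> ('b \<Rightarrow> 'b \<Rightarrow> bool) \<Rightarrow> 'b \<Rightarrow> bool" where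
  "finite_cofoundation_rank P lt x \<longleftrightarrow> finite_foundation_rank P (\<lambda>u v. lt v u) x"

text \<open>height p \<ge> d in Spec (ordered by inclusion): p does not have height < d.
  A prime of infinite (or undefined) height counts as having height \<ge> every d.\<close>
definition height_ge :: "'a::{distrib_lattice,bounded_lattice} set \<Rightarrow> nat \<Rightarrow> bool" where
  "height_ge p d \<longleftrightarrow> (\<forall>n<d. \<not> rank_le Spec (\<subset>) p n)"

text \<open>codim a \<ge> d  iff every prime filter containing a has height \<ge> d
  (codim = +\<infinity> if no prime filter contains a).\<close>
definition codim_ge :: "'a::{distrib_lattice,bounded_lattice} \<Rightarrow> nat \<Rightarrow> bool" where
  "codim_ge a d \<longleftrightarrow> (\<forall>p\<in>Spec. a \<in> p \<longrightarrow> height_ge p d)"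

definition codim_finite :: "'a::{distrib_lattice,bounded_lattice} \<Rightarrow> bool" where
  "codim_finite a \<longleftrightarrow> (\<exists>p\<in>Spec. a \<in> p \<and> finite_foundation_rank Spec (\<subset>) p)"

definition dL :: "nat \<Rightarrow> 'a::{distrib_lattice,bounded_lattice} set" where
  "dL d = {a. codim_ge a d}"

definition hausdorff :: "'a::{distrib_lattice,bounded_lattice} itself \<Rightarrow> bool" where
  "hausdorff _ \<longleftrightarrow> (\<forall>a::'a. a \<noteq> bot \<longrightarrow> codim_finite a)"

definition precompact :: "'a::{distrib_lattice,bounded_lattice} itself \<Rightarrow> bool" where
  "precompact _ \<longleftrightarrow> (\<forall>d\<ge>1. finite ((UNIV::'a set) // qrel (dL d)))"

text \<open>An element of the projective limit is a compatible family of classes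
  f d \<in> L/dL (d \<ge> 1); the canonical surjection L/(d+1)L \<rightarrow> L/dL sends a class
  to the class containing it, so compatibility is f (d+1) \<subseteq> f d.  The unused
  index 0 is normalised to UNIV.\<close>
definition Lhat :: "(nat \<Rightarrow> 'a::{distrib_lattice,bounded_lattice} set) set" where
  "Lhat = {f. f 0 = UNIV \<and> (\<forall>d\<ge>1. f d \<in> UNIV // qrel (dL d) \<and> f (Suc d) \<subseteq> f d)}"

text \<open>Order of L/I: [a] \<le> [b] iff [a \<sqinter> b] = [a]; on \<widehat>L componentwise.\<close>
definition hle :: "(nat \<Rightarrow> 'a::{distrib_lattice,bounded_lattice} set) \<Rightarrow> (nat \<Rightarrow> 'a set) \<Rightarrow> bool" where
  "hle f g \<longleftrightarrow> (\<forall>d\<ge>1. \<forall>a\<in>f d. \<forall>b\<in>g d. (a, inf a b) \<in> qrel (dL d))"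

definition hemb :: "'a::{distrib_lattice,bounded_lattice} \<Rightarrow> nat \<Rightarrow> 'a set" where
  "hemb a = (\<lambda>d. if d = 0 then UNIV else qrel (dL d) `` {a})"

definition is_inf_in :: "'b set \<Rightarrow> ('b \<Rightarrow> 'b \<Rightarrow> bool) \<Rightarrow> 'b set \<Rightarrow> 'b \<Rightarrow> bool" where
  "is_inf_in P le A m \<longleftrightarrow> m \<in> P \<and> (\<forall>a\<in>A. le m a) \<and> (\<forall>z\<in>P. (\<forall>a\<in>A. le z a) \<longrightarrow> le z m)"

definition is_sup_in :: "'b set \<Rightarrow> ('b \<Rightarrow> 'b \<Rightarrow> bool) \<Rightarrow> 'b set \<Rightarrow> 'b \<Rightarrow> bool" where
  "is_sup_in P le A m \<longleftrightarrow> m \<in> P \<and> (\<forall>a\<in>A. le a m) \<and> (\<forall>z\<in>P. (\<forall>a\<in>A. le a z) \<longrightarrow> le m z)"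

definition Inf_in :: "'b set \<Rightarrow> ('b \<Rightarrow> 'b \<Rightarrow> bool) \<Rightarrow> 'b set \<Rightarrow> 'b" where
  "Inf_in P le A = (THE m. is_inf_in P le A m)"

definition Sup_in :: "'b set \<Rightarrow> ('b \<Rightarrow> 'b \<Rightarrow> bool) \<Rightarrow> 'b set \<Rightarrow> 'b" where
  "Sup_in P le A = (THE m. is_sup_in P le A m)"

definition cmi :: "'b set \<Rightarrow> ('b \<Rightarrow> 'b \<Rightarrow> bool) \<Rightarrow> 'b set" where
  "cmi P le = {x\<in>P. (\<exists>y\<in>P. \<not> le y x) \<and>
      (\<forall>A m. A \<subseteq> P \<longrightarrow> is_inf_in P le A m \<longrightarrow> le m x \<longrightarrow> (\<exists>a\<in>A. le a x))}"

definition cji :: "'b set \<Rightarrow> ('b \<Rightarrow> 'b \<Rightarrow> bool) \<Rightarrow> 'b set" where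
  "cji P le = {x\<in>P. (\<exists>y\<in>P. \<not> le x y) \<and>
      (\<forall>A m. A \<subseteq> P \<longrightarrow> is_sup_in P le A m \<longrightarrow> le x m \<longrightarrow> (\<exists>a\<in>A. le x a))}"

definition vee_map :: "'a::{distrib_lattice,bounded_lattice} \<Rightarrow> 'a" where
  "vee_map x = Inf_in UNIV (\<le>) {y. \<not> y \<le> x}"

definition wedge_map :: "'a::{distrib_lattice,bounded_lattice} \<Rightarrow> 'a" where
  "wedge_map x = Sup_in UNIV (\<le>) {y. \<not> x \<le> y}"

end

theory Submission imports Defs begin

lemma rank_le_subset:
  assumes "rank_le P (\<subset>) (p::'b set) n" "p' \<subseteq> p"
  shows "rank_le P (\<subset>) p' n"
  using assms by (cases n) (auto dest: psubset_subset_trans)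

lemma rank_le_Suc: "rank_le P lt x n \<Longrightarrow> rank_le P lt x (Suc n)"
  by (induction n arbitrary: x) auto

lemma rank_le_mono:
  assumes "rank_le P lt x n" "n \<le> m" shows "rank_le P lt x m"
  using assms(2)
proof (induction m rule: dec_induct)
  case base show ?case by (rule assms(1))
next
  case (step k) show ?case using step.IH by (rule rank_le_Suc)
qed

lemma rank_descent:
  assumes "p \<in> P" "rank_le P (\<subset>) p m" "\<not> rank_le P (\<subset>) p k"
  shows "\<exists>p'\<in>P. p' \<subseteq> p \<and> rank_le P (\<subset>) p' (Suc k) \<and> \<not> rank_le P (\<subset>) p' k"
  using assms
proof (induction m arbitrary: p)
  case 0
  then show ?case using rank_le_mono[of P "(\<subset>)" p 0 k] by auto
next
  case (Suc m)
  show ?case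
  proof (cases "rank_le P (\<subset>) p (Suc k)")
    case True then show ?thesis using Suc.prems by auto
  next
    case False
    then obtain y where y: "y \<in> P" "y \<subset> p" "\<not> rank_le P (\<subset>) y k" by auto
    have "rank_le P (\<subset>) y m" using Suc.prems(2) y by auto
    from Suc.IH[OF y(1) this y(3)] y(2) show ?thesis by blast
  qed
qed

locale cha =
  fixes L :: "'a::{distrib_lattice,bounded_lattice} itself"
  assumes ch: "coheyting L" and pc: "precompact L" and hd: "hausdorff L"
begin

lemma cdiff_is: "is_cdiff (a::'a) b (cdiff a b)"
proof -
  obtain c where c: "is_cdiff a b c" using ch unfolding coheyting_def by blast
  have "cdiff a b = c" unfolding cdiff_def
  proof (rule the_equality)
    show "is_cdiff a b c" by (rule c)
  next
    fix c' assume "is_cdiff a b c'"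
    with c show "c' = c" unfolding is_cdiff_def by (meson order.antisym)
  qed
  with c show ?thesis by simp
qed

lemma cd1: "(a::'a) \<le> sup b (cdiff a b)"
  using cdiff_is unfolding is_cdiff_def by blast

lemma cd2: "(a::'a) \<le> sup b c \<Longrightarrow> cdiff a b \<le> c"
  using cdiff_is unfolding is_cdiff_def by blast

lemma cd_bot: "cdiff (a::'a) b = bot \<Longrightarrow> a \<le> b"
  using cd1[of a b] by simp

lemma cd_le: "cdiff (a::'a) b \<le> a"
  by (rule cd2) simp

lemma pf_top: "p \<in> Spec \<Longrightarrow> (top::'a) \<in> p" unfolding Spec_def prime_filter_def by blast
lemma pf_bot: "p \<in> Spec \<Longrightarrow> (bot::'a) \<notin> p" unfolding Spec_def prime_filter_def by blast
lemma pf_up: "p \<in> Spec \<Longrightarrow> (a::'a) \<in> p \<Longrightarrow> a \<le> b \<Longrightarrow> b \<in> p" unfolding Spec_def prime_filter_def by blast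
lemma pf_inf: "p \<in> Spec \<Longrightarrow> (a::'a) \<in> p \<Longrightarrow> b \<in> p \<Longrightarrow> inf a b \<in> p" unfolding Spec_def prime_filter_def by blast
lemma pf_sup: "p \<in> Spec \<Longrightarrow> sup (a::'a) b \<in> p \<Longrightarrow> a \<in> p \<or> b \<in> p" unfolding Spec_def prime_filter_def by blast

lemma pf_cd: "p \<in> Spec \<Longrightarrow> (a::'a) \<in> p \<Longrightarrow> b \<notin> p \<Longrightarrow> cdiff a b \<in> p"
  using pf_up[of p a "sup b (cdiff a b)"] cd1[of a b] pf_sup by blast

lemma PL:
  assumes p: "p \<in> Spec" and ab: "cdiff (a::'a) b \<in> p"
  shows "\<exists>p'\<in>Spec. p' \<subseteq> p \<and> a \<in> p' \<and> b \<notin> p'"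
proof -
  define I where "I = {y::'a. \<exists>w. w \<notin> p \<and> y \<le> sup b w}"
  define A where "A = {G::'a set. (\<forall>y. a \<le> y \<longrightarrow> y \<in> G) \<and> (\<forall>x y. x \<in> G \<longrightarrow> x \<le> y \<longrightarrow> y \<in> G)
     \<and> (\<forall>x y. x \<in> G \<longrightarrow> y \<in> G \<longrightarrow> inf x y \<in> G) \<and> G \<inter> I = {}}"
  have aI: "\<not> a \<le> sup b w" if "w \<notin> p" for w
  proof
    assume "a \<le> sup b w"
    then have "cdiff a b \<le> w" by (rule cd2)
    then have "w \<in> p" using pf_up[OF p ab] by blast
    with that show False by simp
  qed
  have "{y. a \<le> y} \<in> A" unfolding A_def I_def
    using aI by (auto intro: order_trans)
  then have Ane: "A \<noteq> {}" by blast
  have "\<exists>G\<in>A. \<forall>X\<in>A. G \<subseteq> X \<longrightarrow> X = G"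
  proof (rule subset_Zorn_nonempty[OF Ane])
    fix C assume C: "C \<noteq> {}" "subset.chain A C"
    then have CA: "C \<subseteq> A" and lin: "\<forall>X\<in>C. \<forall>Y\<in>C. X \<subseteq> Y \<or> Y \<subseteq> X"
      by (auto simp: subset_chain_def)
    show "\<Union>C \<in> A" unfolding A_def
    proof (intro CollectI conjI allI impI)
      fix y assume "a \<le> y" then show "y \<in> \<Union>C" using C(1) CA unfolding A_def by blast
    next
      fix x y assume "x \<in> \<Union>C" "x \<le> y" then show "y \<in> \<Union>C" using CA unfolding A_def by blast
    next
      fix x y assume x: "x \<in> \<Union>C" and y: "y \<in> \<Union>C"
      then obtain X Y where XY: "X \<in> C" "Y \<in> C" "x \<in> X" "y \<in> Y" by blast
      show "inf x y \<in> \<Union>C"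
      proof (cases "X \<subseteq> Y")
        case True then show ?thesis using XY CA unfolding A_def by blast
      next
        case False then have "Y \<subseteq> X" using lin XY by blast
        then show ?thesis using XY CA unfolding A_def by blast
      qed
    next
      show "\<Union>C \<inter> I = {}" using CA unfolding A_def by blast
    qed
  qed
  then obtain G where GA: "G \<in> A" and Gmax: "\<forall>X\<in>A. G \<subseteq> X \<longrightarrow> X = G" by blast
  have Ga: "\<And>y. a \<le> y \<Longrightarrow> y \<in> G" and Gup: "\<And>x y. x \<in> G \<Longrightarrow> x \<le> y \<Longrightarrow> y \<in> G"
    and Ginf: "\<And>x y. x \<in> G \<Longrightarrow> y \<in> G \<Longrightarrow> inf x y \<in> G" and GI: "G \<inter> I = {}"
    using GA unfolding A_def by blast+
  have bI: "b \<in> I" unfolding I_def using pf_bot[OF p] by (intro CollectI exI[of _ bot]) simp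
  have topG: "top \<in> G" by (rule Ga) simp
  have ext: "\<exists>g\<in>G. \<exists>w. w \<notin> p \<and> inf g x \<le> sup b w" if xG: "x \<notin> G" for x
  proof (rule ccontr)
    assume nex: "\<not> ?thesis"
    define Gx where "Gx = {z. \<exists>g\<in>G. inf g x \<le> z}"
    have "Gx \<in> A" unfolding A_def
    proof (intro CollectI conjI allI impI)
      fix y assume "a \<le> y"
      then have "y \<in> G" by (rule Ga)
      then show "y \<in> Gx" unfolding Gx_def by (intro CollectI bexI[of _ y]) auto
    next
      fix u v assume "u \<in> Gx" "u \<le> v" then show "v \<in> Gx" unfolding Gx_def by (auto intro: order_trans)
    next
      fix u v assume "u \<in> Gx" "v \<in> Gx"
      then obtain g1 g2 where g: "g1 \<in> G" "g2 \<in> G" "inf g1 x \<le> u" "inf g2 x \<le> v" unfolding Gx_def by blast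
      have "inf (inf g1 g2) x \<le> inf g1 x" by (rule inf_mono) simp_all
      moreover have "inf (inf g1 g2) x \<le> inf g2 x" by (rule inf_mono) simp_all
      ultimately have "inf (inf g1 g2) x \<le> inf u v" using g(3,4) by (meson le_inf_iff order_trans)
      moreover have "inf g1 g2 \<in> G" by (rule Ginf[OF g(1) g(2)])
      ultimately show "inf u v \<in> Gx" unfolding Gx_def by blast
    next
      show "Gx \<inter> I = {}"
      proof (rule ccontr)
        assume "Gx \<inter> I \<noteq> {}"
        then obtain z g w where "g \<in> G" "inf g x \<le> z" "w \<notin> p" "z \<le> sup b w"
          unfolding Gx_def I_def by blast
        then show False using nex by (meson order_trans)
      qed
    qed
    moreover have "G \<subseteq> Gx" unfolding Gx_def by (auto intro: le_infI1)
    ultimately have "Gx = G" using Gmax by blast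
    moreover have "x \<in> Gx" unfolding Gx_def using topG by (intro CollectI bexI[of _ top]) auto
    ultimately show False using xG by simp
  qed
  have "G \<in> Spec" unfolding Spec_def prime_filter_def
  proof (intro CollectI conjI allI impI)
    show "top \<in> G" by (rule topG)
    show "bot \<notin> G"
    proof
      assume "bot \<in> G"
      moreover have "bot \<in> I" unfolding I_def using pf_bot[OF p] by (intro CollectI exI[of _ bot]) simp
      ultimately show False using GI by blast
    qed
  next
    fix x y assume "x \<in> G" "x \<le> y" then show "y \<in> G" by (rule Gup)
  next
    fix x y assume "x \<in> G" "y \<in> G" then show "inf x y \<in> G" by (rule Ginf)
  next
    fix x y assume xy: "sup x y \<in> G"
    show "x \<in> G \<or> y \<in> G"
    proof (rule ccontr)
      assume "\<not> ?thesis"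
      then have nx: "x \<notin> G" and ny: "y \<notin> G" by auto
      obtain g1 w1 where g1: "g1 \<in> G" "w1 \<notin> p" "inf g1 x \<le> sup b w1" using ext[OF nx] by blast
      obtain g2 w2 where g2: "g2 \<in> G" "w2 \<notin> p" "inf g2 y \<le> sup b w2" using ext[OF ny] by blast
      define g where "g = inf (inf g1 g2) (sup x y)"
      have gG: "g \<in> G" unfolding g_def by (intro Ginf g1(1) g2(1) xy)
      have "g = sup (inf (inf g1 g2) x) (inf (inf g1 g2) y)" unfolding g_def by (rule inf_sup_distrib1)
      also have "\<dots> \<le> sup (inf g1 x) (inf g2 y)"
        by (intro sup_mono) (auto intro: le_infI1 le_infI2)
      also have "\<dots> \<le> sup b (sup w1 w2)"
      proof (rule le_supI)
        have "sup b w1 \<le> sup b (sup w1 w2)" by (rule sup_mono) simp_all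
        then show "inf g1 x \<le> sup b (sup w1 w2)" using g1(3) by (rule order_trans[rotated])
        have "sup b w2 \<le> sup b (sup w1 w2)" by (rule sup_mono) simp_all
        then show "inf g2 y \<le> sup b (sup w1 w2)" using g2(3) by (rule order_trans[rotated])
      qed
      finally have gle: "g \<le> sup b (sup w1 w2)" .
      have "sup w1 w2 \<notin> p" using g1(2) g2(2) pf_sup[OF p, of w1 w2] by blast
      then have "g \<in> I" unfolding I_def using gle by blast
      with gG GI show False by blast
    qed
  qed
  moreover have "G \<subseteq> p"
  proof
    fix z assume "z \<in> G"
    show "z \<in> p"
    proof (rule ccontr)
      assume "z \<notin> p"
      then have "z \<in> I" unfolding I_def by (intro CollectI exI[of _ z]) simp
      with \<open>z \<in> G\<close> GI show False by blast
    qed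
  qed
  moreover have "a \<in> G" by (rule Ga) simp
  moreover have "b \<notin> G" using bI GI by blast
  ultimately show ?thesis by blast
qed


lemma QR: "((u::'a), v) \<in> qrel (dL d) \<longleftrightarrow>
   (\<forall>p\<in>(Spec::'a set set). (\<exists>n<d. rank_le Spec (\<subset>) p n) \<longrightarrow> (u \<in> p \<longleftrightarrow> v \<in> p))"
proof
  assume "(u, v) \<in> qrel (dL d)"
  then have cg: "codim_ge (sup (cdiff u v) (cdiff v u)) d" unfolding qrel_def dL_def by simp
  show "\<forall>p\<in>(Spec::'a set set). (\<exists>n<d. rank_le Spec (\<subset>) p n) \<longrightarrow> (u \<in> p \<longleftrightarrow> v \<in> p)"
  proof (intro ballI impI)
    fix p :: "'a set" assume p: "p \<in> Spec" and r: "\<exists>n<d. rank_le Spec (\<subset>) p n"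
    have nsup: "sup (cdiff u v) (cdiff v u) \<notin> p"
      using cg p r unfolding codim_ge_def height_ge_def by blast
    show "u \<in> p \<longleftrightarrow> v \<in> p"
    proof
      assume "u \<in> p" show "v \<in> p"
      proof (rule ccontr)
        assume "v \<notin> p"
        with p \<open>u \<in> p\<close> have "cdiff u v \<in> p" by (rule pf_cd)
        then have "sup (cdiff u v) (cdiff v u) \<in> p" using pf_up[OF p] by simp
        with nsup show False by simp
      qed
    next
      assume "v \<in> p" show "u \<in> p"
      proof (rule ccontr)
        assume "u \<notin> p"
        with p \<open>v \<in> p\<close> have "cdiff v u \<in> p" by (rule pf_cd)
        then have "sup (cdiff u v) (cdiff v u) \<in> p" using pf_up[OF p] by simp
        with nsup show False by simp
      qed
    qed
  qed
next
  assume H: "\<forall>p\<in>(Spec::'a set set). (\<exists>n<d. rank_le Spec (\<subset>) p n) \<longrightarrow> (u \<in> p \<longleftrightarrow> v \<in> p)"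
  have "codim_ge (sup (cdiff u v) (cdiff v u)) d" unfolding codim_ge_def height_ge_def
  proof (intro ballI impI allI notI)
    fix p :: "'a set" and n assume p: "p \<in> Spec" and s: "sup (cdiff u v) (cdiff v u) \<in> p"
      and nd: "n < d" and r: "rank_le Spec (\<subset>) p n"
    from pf_sup[OF p s] show False
    proof
      assume "cdiff u v \<in> p"
      from PL[OF p this] obtain p' where p': "p' \<in> Spec" "p' \<subseteq> p" "u \<in> p'" "v \<notin> p'" by blast
      have "rank_le Spec (\<subset>) p' n" using r p'(2) by (rule rank_le_subset)
      with H p' nd show False by blast
    next
      assume "cdiff v u \<in> p"
      from PL[OF p this] obtain p' where p': "p' \<in> Spec" "p' \<subseteq> p" "v \<in> p'" "u \<notin> p'" by blast
      have "rank_le Spec (\<subset>) p' n" using r p'(2) by (rule rank_le_subset)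
      with H p' nd show False by blast
    qed
  qed
  then show "(u, v) \<in> qrel (dL d)" unfolding qrel_def dL_def by simp
qed

lemma finite_S:
  assumes "1 \<le> d"
  shows "finite {p \<in> (Spec::'a set set). \<exists>n<d. rank_le Spec (\<subset>) p n}"
proof -
  define Q where "Q = (UNIV::'a set) // qrel (dL d)"
  have fQ: "finite Q" using pc assms unfolding precompact_def Q_def by blast
  have "{p \<in> (Spec::'a set set). \<exists>n<d. rank_le Spec (\<subset>) p n} \<subseteq> Union ` Pow Q"
  proof
    fix p :: "'a set" assume "p \<in> {p \<in> Spec. \<exists>n<d. rank_le Spec (\<subset>) p n}"
    then have p: "p \<in> Spec" "\<exists>n<d. rank_le Spec (\<subset>) p n" by auto
    have "p = \<Union>{C \<in> Q. C \<subseteq> p}"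
    proof
      show "p \<subseteq> \<Union>{C \<in> Q. C \<subseteq> p}"
      proof
        fix x assume x: "x \<in> p"
        have "qrel (dL d) `` {x} \<in> Q" unfolding Q_def by (rule quotientI) simp
        moreover have "qrel (dL d) `` {x} \<subseteq> p" using QR p x by blast
        moreover have "x \<in> qrel (dL d) `` {x}" using QR by blast
        ultimately show "x \<in> \<Union>{C \<in> Q. C \<subseteq> p}" by blast
      qed
    qed blast
    then show "p \<in> Union ` Pow Q" by blast
  qed
  moreover have "finite (Union ` Pow Q)" using fQ by simp
  ultimately show ?thesis by (rule finite_subset)
qed

lemma finite_T: "finite {p \<in> (Spec::'a set set). rank_le Spec (\<subset>) p n}"
  by (rule finite_subset[OF _ finite_S[of "Suc n"]]) auto

lemma lemD:
  assumes "\<not> (a::'a) \<le> b"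
  shows "\<exists>p\<in>Spec. (\<exists>n. rank_le Spec (\<subset>) p n) \<and> a \<in> p \<and> b \<notin> p"
proof -
  have "cdiff a b \<noteq> bot" using assms cd_bot by blast
  then have "codim_finite (cdiff a b)" using hd unfolding hausdorff_def by blast
  then obtain p where p: "p \<in> Spec" "cdiff a b \<in> p" "\<exists>n. rank_le Spec (\<subset>) p n"
    unfolding codim_finite_def finite_foundation_rank_def by blast
  from PL[OF p(1,2)] obtain p' where p': "p' \<in> Spec" "p' \<subseteq> p" "a \<in> p'" "b \<notin> p'" by blast
  from p(3) obtain n where "rank_le Spec (\<subset>) p n" by blast
  then have "rank_le Spec (\<subset>) p' n" using p'(2) by (rule rank_le_subset)
  with p' show ?thesis by blast
qed

definition Fq :: "'a set \<Rightarrow> bool" where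
  "Fq q \<longleftrightarrow> q \<in> Spec \<and> (\<exists>n. rank_le Spec (\<subset>) q n)"

lemma join_outside:
  assumes "finite F" "F \<subseteq> {p \<in> Spec. \<not> p \<subseteq> q}" "q \<in> Spec"
  shows "\<exists>x::'a. x \<notin> q \<and> (\<forall>p\<in>F. x \<in> p)"
  using assms
proof (induction F rule: finite_induct)
  case empty then show ?case using pf_bot by blast
next
  case (insert p F)
  then obtain x' where x': "x' \<notin> q" "\<forall>p\<in>F. x' \<in> p" by auto
  from insert.prems obtain t where t: "t \<in> p" "t \<notin> q" and pS: "p \<in> Spec" by auto
  have "sup x' t \<notin> q" using pf_sup[OF insert.prems(2)] x'(1) t(2) by blast
  moreover have "sup x' t \<in> p" using pf_up[OF pS t(1)] by simp
  moreover have "\<forall>p'\<in>F. sup x' t \<in> p'"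
  proof
    fix p' assume "p' \<in> F"
    then have "p' \<in> Spec" "x' \<in> p'" using x'(2) insert.prems(1) by auto
    then show "sup x' t \<in> p'" using pf_up[of p' x' "sup x' t"] by simp
  qed
  ultimately show ?case by blast
qed

lemma meet_inside:
  assumes "finite G" "G \<subseteq> {p \<in> Spec. p \<subset> q}" "q \<in> Spec"
  shows "\<exists>a::'a. a \<in> q \<and> (\<forall>p\<in>G. a \<notin> p)"
  using assms
proof (induction G rule: finite_induct)
  case empty then show ?case using pf_top by blast
next
  case (insert p G)
  then obtain a' where a': "a' \<in> q" "\<forall>p\<in>G. a' \<notin> p" by auto
  from insert.prems obtain e where e: "e \<in> q" "e \<notin> p" and pS: "p \<in> Spec" by auto
  have "inf a' e \<in> q" using pf_inf[OF insert.prems(2) a'(1) e(1)] .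
  moreover have "inf a' e \<notin> p" using pf_up[OF pS, of "inf a' e" e] e(2) by auto
  moreover have "\<forall>p'\<in>G. inf a' e \<notin> p'"
  proof
    fix p' assume "p' \<in> G"
    then have "p' \<in> Spec" "a' \<notin> p'" using a'(2) insert.prems(1) by auto
    then show "inf a' e \<notin> p'" using pf_up[of p' "inf a' e" a'] by auto
  qed
  ultimately show ?case by blast
qed

lemma lemB:
  assumes q: "q \<in> Spec" and r: "rank_le Spec (\<subset>) q n"
  shows "\<exists>x::'a. x \<notin> q \<and> (\<forall>y. y \<notin> q \<longrightarrow> y \<le> x)"
proof -
  define F where "F = {p \<in> (Spec::'a set set). rank_le Spec (\<subset>) p (Suc n) \<and> \<not> p \<subseteq> q}"
  have "finite F" unfolding F_def by (rule finite_subset[OF _ finite_T[of "Suc n"]]) auto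
  then obtain x where x: "x \<notin> q" "\<forall>p\<in>F. x \<in> p"
    using join_outside[of F q] q unfolding F_def by auto
  have "y \<le> x" if y: "y \<notin> q" for y
  proof (rule ccontr)
    assume "\<not> y \<le> x"
    from lemD[OF this] obtain p where p: "p \<in> Spec" "y \<in> p" "x \<notin> p" and "\<exists>m. rank_le Spec (\<subset>) p m"
      by blast
    then obtain m where m: "rank_le Spec (\<subset>) p m" by blast
    have pq: "\<not> p \<subseteq> q" using p y by blast
    show False
    proof (cases "rank_le Spec (\<subset>) p (Suc n)")
      case True then have "p \<in> F" unfolding F_def using p pq by blast
      with x p show False by blast
    next
      case False
      then have "\<not> rank_le Spec (\<subset>) p n" using rank_le_Suc[of Spec "(\<subset>)" p n] by blast
      from rank_descent[OF p(1) m this] obtain p3 where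
        p3: "p3 \<in> Spec" "p3 \<subseteq> p" "rank_le Spec (\<subset>) p3 (Suc n)" "\<not> rank_le Spec (\<subset>) p3 n" by blast
      have "\<not> p3 \<subseteq> q" using p3(4) rank_le_subset[OF r] by blast
      then have "p3 \<in> F" unfolding F_def using p3 by blast
      with x p3(2) p(3) show False by blast
    qed
  qed
  with x show ?thesis by blast
qed

lemma lemC:
  assumes q: "q \<in> Spec" and r: "rank_le Spec (\<subset>) q n"
  shows "\<exists>g::'a. g \<in> q \<and> (\<forall>y\<in>q. g \<le> y)"
proof -
  define G where "G = {p \<in> (Spec::'a set set). rank_le Spec (\<subset>) p n \<and> p \<subset> q}"
  have "finite G" unfolding G_def by (rule finite_subset[OF _ finite_T[of n]]) auto
  then obtain a where a: "a \<in> q" "\<forall>p\<in>G. a \<notin> p"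
    using meet_inside[of G q] q unfolding G_def by auto
  obtain x where x: "x \<notin> q" "\<forall>y. y \<notin> q \<longrightarrow> y \<le> x" using lemB[OF q r] by blast
  define g where "g = cdiff a x"
  have gq: "g \<in> q" unfolding g_def by (rule pf_cd[OF q a(1) x(1)])
  have "g \<le> y" if y: "y \<in> q" for y
  proof (rule ccontr)
    assume "\<not> g \<le> y"
    from lemD[OF this] obtain p where p: "p \<in> Spec" "g \<in> p" "y \<notin> p" by blast
    from PL[OF p(1)] p(2) obtain p3 where p3: "p3 \<in> Spec" "p3 \<subseteq> p" "a \<in> p3" "x \<notin> p3"
      unfolding g_def by blast
    have "p3 \<subseteq> q"
    proof
      fix t assume "t \<in> p3"
      show "t \<in> q"
      proof (rule ccontr)
        assume "t \<notin> q"
        then have "t \<le> x" using x by blast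
        with \<open>t \<in> p3\<close> p3(1) have "x \<in> p3" using pf_up by blast
        with p3 show False by blast
      qed
    qed
    moreover have "y \<notin> p3" using p3(2) p(3) by blast
    ultimately have "p3 \<subset> q" using y by blast
    moreover have "rank_le Spec (\<subset>) p3 n" using r \<open>p3 \<subseteq> q\<close> by (rule rank_le_subset)
    ultimately have "p3 \<in> G" unfolding G_def using p3(1) by blast
    with a p3 show False by blast
  qed
  with gq show ?thesis by blast
qed

definition U :: "'a \<Rightarrow> 'a set" where "U x = {y. \<not> y \<le> x}"
definition Up :: "'a \<Rightarrow> 'a set" where "Up g = {y. g \<le> y}"

lemma lemB': "Fq q \<Longrightarrow> \<exists>x. U x = q"
proof -
  assume "Fq q"
  then obtain n where q: "q \<in> Spec" "rank_le Spec (\<subset>) q n" unfolding Fq_def by blast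
  from lemB[OF q] obtain x where x: "x \<notin> q" "\<forall>y. y \<notin> q \<longrightarrow> y \<le> x" by blast
  have "U x = q" unfolding U_def using x pf_up[OF q(1)] by blast
  then show ?thesis by blast
qed

lemma lemC': "Fq q \<Longrightarrow> \<exists>g. Up g = q"
proof -
  assume "Fq q"
  then obtain n where q: "q \<in> Spec" "rank_le Spec (\<subset>) q n" unfolding Fq_def by blast
  from lemC[OF q] obtain g where g: "g \<in> q" "\<forall>y\<in>q. g \<le> y" by blast
  have "Up g = q" unfolding Up_def using g pf_up[OF q(1)] by blast
  then show ?thesis by blast
qed


lemma inf5: "is_inf_in UNIV (\<le>) {x. Fq (U x) \<and> (a::'a) \<le> x} a"
  unfolding is_inf_in_def
proof (intro conjI ballI impI)
  fix z assume H: "\<forall>x\<in>{x. Fq (U x) \<and> a \<le> x}. z \<le> x"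
  show "z \<le> a"
  proof (rule ccontr)
    assume "\<not> z \<le> a"
    from lemD[OF this] obtain p where p: "p \<in> Spec" "\<exists>n. rank_le Spec (\<subset>) p n" "z \<in> p" "a \<notin> p" by blast
    then have "Fq p" unfolding Fq_def by blast
    from lemB'[OF this] obtain x where x: "U x = p" by blast
    have "a \<le> x" using p(4) x unfolding U_def by blast
    with H x \<open>Fq p\<close> have "z \<le> x" by blast
    with p(3) x show False unfolding U_def by blast
  qed
qed auto

lemma M_char: "x \<in> cmi (UNIV::'a set) (\<le>) \<longleftrightarrow> Fq (U x)"
proof
  assume xM: "x \<in> cmi (UNIV::'a set) (\<le>)"
  then have c: "\<And>A m. is_inf_in UNIV (\<le>) A m \<Longrightarrow> m \<le> x \<Longrightarrow> \<exists>a\<in>A. a \<le> x"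
    unfolding cmi_def by blast
  from c[OF inf5[of x]] obtain x' where "Fq (U x')" "x \<le> x'" "x' \<le> x" by auto
  then show "Fq (U x)" using order.antisym by blast
next
  assume F: "Fq (U x)"
  then have US: "U x \<in> Spec" unfolding Fq_def by blast
  from lemC'[OF F] obtain g where g: "Up g = U x" by blast
  show "x \<in> cmi (UNIV::'a set) (\<le>)" unfolding cmi_def
  proof (intro CollectI conjI allI impI)
    show "\<exists>y\<in>UNIV. \<not> y \<le> x" using pf_top[OF US] unfolding U_def by blast
  next
    fix A m assume "A \<subseteq> (UNIV::'a set)" and im: "is_inf_in UNIV (\<le>) A m" and mx: "m \<le> x"
    show "\<exists>a\<in>A. a \<le> x"
    proof (rule ccontr)
      assume "\<not> ?thesis"
      then have "\<forall>a\<in>A. g \<le> a" using g unfolding U_def Up_def by auto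
      then have "g \<le> m" using im unfolding is_inf_in_def by blast
      with mx have "g \<le> x" by simp
      moreover have "g \<in> Up g" unfolding Up_def by simp
      ultimately show False using g unfolding U_def by auto
    qed
  qed simp
qed

lemma J_char: "g \<in> cji (UNIV::'a set) (\<le>) \<longleftrightarrow> Fq (Up g)"
proof
  assume gJ: "g \<in> cji (UNIV::'a set) (\<le>)"
  from gJ have ex: "\<exists>y::'a. \<not> g \<le> y" and
    c: "\<And>A m. is_sup_in UNIV (\<le>) A m \<Longrightarrow> g \<le> m \<Longrightarrow> \<exists>a\<in>A. g \<le> a"
    unfolding cji_def by blast+
  have gb: "g \<noteq> bot" using ex by auto
  have US: "Up g \<in> Spec" unfolding Spec_def prime_filter_def Up_def
  proof (rule CollectI, intro conjI allI impI)
    show "top \<in> {y. g \<le> y}" by simp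
    show "bot \<notin> {y. g \<le> y}" using gb by (simp add: bot_unique)
  next
    fix a b assume "a \<in> {y. g \<le> y}" "a \<le> b" then show "b \<in> {y. g \<le> y}" by simp
  next
    fix a b assume "a \<in> {y. g \<le> y}" "b \<in> {y. g \<le> y}" then show "inf a b \<in> {y. g \<le> y}" by simp
  next
    fix a b assume ab: "sup a b \<in> {y. g \<le> y}"
    have "is_sup_in UNIV (\<le>) {a, b} (sup a b)" unfolding is_sup_in_def by auto
    then show "a \<in> {y. g \<le> y} \<or> b \<in> {y. g \<le> y}" using c ab by blast
  qed
  from gb have "codim_finite g" using hd unfolding hausdorff_def by blast
  then obtain p n where p: "p \<in> Spec" "g \<in> p" "rank_le Spec (\<subset>) p n"
    unfolding codim_finite_def finite_foundation_rank_def by blast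
  have "Up g \<subseteq> p" unfolding Up_def using pf_up[OF p(1,2)] by blast
  then have "rank_le Spec (\<subset>) (Up g) n" using p(3) rank_le_subset by blast
  with US show "Fq (Up g)" unfolding Fq_def by blast
next
  assume F: "Fq (Up g)"
  then have US: "Up g \<in> Spec" unfolding Fq_def by blast
  from lemB'[OF F] obtain x where x: "U x = Up g" by blast
  show "g \<in> cji (UNIV::'a set) (\<le>)" unfolding cji_def
  proof (intro CollectI conjI allI impI)
    show "\<exists>y\<in>UNIV. \<not> g \<le> y" using pf_bot[OF US] unfolding Up_def by blast
  next
    fix A m assume "A \<subseteq> (UNIV::'a set)" and im: "is_sup_in UNIV (\<le>) A m" and gm: "g \<le> m"
    show "\<exists>a\<in>A. g \<le> a"
    proof (rule ccontr)
      assume "\<not> ?thesis"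
      then have "\<forall>a\<in>A. a \<le> x" using x unfolding U_def Up_def by blast
      then have "m \<le> x" using im unfolding is_sup_in_def by blast
      with gm have "g \<le> x" by simp
      moreover have "g \<in> Up g" unfolding Up_def by simp
      ultimately show False using x unfolding U_def by auto
    qed
  qed simp
qed

lemma inf_in_eq: "is_inf_in (UNIV::'a set) (\<le>) A m \<Longrightarrow> Inf_in UNIV (\<le>) A = m"
  unfolding Inf_in_def
  by (rule the_equality) (auto simp: is_inf_in_def intro: order.antisym)

lemma sup_in_eq: "is_sup_in (UNIV::'a set) (\<le>) A m \<Longrightarrow> Sup_in UNIV (\<le>) A = m"
  unfolding Sup_in_def
  by (rule the_equality) (auto simp: is_sup_in_def intro: order.antisym)

lemma vee_is: "Up g = U x \<Longrightarrow> is_inf_in UNIV (\<le>) {y. \<not> y \<le> x} (g::'a)"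
  unfolding is_inf_in_def U_def Up_def by (metis (mono_tags, lifting) mem_Collect_eq order_refl UNIV_I)

lemma wedge_is: "Up g = U x \<Longrightarrow> is_sup_in UNIV (\<le>) {y. \<not> g \<le> y} (x::'a)"
  unfolding is_sup_in_def U_def Up_def by (metis (mono_tags, lifting) mem_Collect_eq order_refl UNIV_I)

lemma vee_eq: "Up g = U x \<Longrightarrow> vee_map x = (g::'a)"
  unfolding vee_map_def by (rule inf_in_eq) (rule vee_is)

lemma wedge_eq: "Up g = U x \<Longrightarrow> wedge_map g = (x::'a)"
  unfolding wedge_map_def by (rule sup_in_eq) (rule wedge_is)


lemma rk3: "rank_le Spec (\<subset>) (U x) n \<Longrightarrow> rank_le (cmi (UNIV::'a set) (\<le>)) (\<lambda>u v. v < u) x n"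
proof (induction n arbitrary: x)
  case 0
  show ?case
  proof (simp only: rank_le.simps, intro ballI notI)
    fix y assume yM: "y \<in> cmi (UNIV::'a set) (\<le>)" and xy: "x < y"
    then have "U y \<in> Spec" using M_char unfolding Fq_def by blast
    moreover have "U y \<subset> U x" unfolding U_def using xy
      by (auto intro: order_trans)
    moreover have "\<forall>z\<in>Spec. \<not> z \<subset> U x"
      using "0.prems" by (simp only: rank_le.simps)
    ultimately show False by blast
  qed
next
  case (Suc n)
  show ?case
  proof (simp only: rank_le.simps, intro ballI impI)
    fix y assume yM: "y \<in> cmi (UNIV::'a set) (\<le>)" and xy: "x < y"
    then have "U y \<in> Spec" using M_char unfolding Fq_def by blast
    moreover have "U y \<subset> U x" unfolding U_def using xy
      by (auto intro: order_trans)
    moreover have "\<forall>z\<in>Spec. z \<subset> U x \<longrightarrow> rank_le Spec (\<subset>) z n"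
      using Suc.prems by (simp only: rank_le.simps)
    ultimately have "rank_le Spec (\<subset>) (U y) n" by blast
    then show "rank_le (cmi UNIV (\<le>)) (\<lambda>u v. v < u) y n" by (rule Suc.IH)
  qed
qed

lemma no_chain: "rank_le P (\<lambda>u v. v < u) ((f::nat \<Rightarrow> 'a) 0) n \<Longrightarrow> (\<forall>k. f k \<in> P) \<Longrightarrow> (\<forall>k. f k < f (Suc k)) \<Longrightarrow> False"
proof (induction n arbitrary: f)
  case 0
  have "\<forall>y\<in>P. \<not> f 0 < y" using "0.prems"(1) by (simp only: rank_le.simps)
  moreover have "f (Suc 0) \<in> P" "f 0 < f (Suc 0)" using "0.prems"(2,3) by blast+
  ultimately show False by blast
next
  case (Suc n)
  have "\<forall>y\<in>P. f 0 < y \<longrightarrow> rank_le P (\<lambda>u v. v < u) y n" using Suc.prems(1) by (simp only: rank_le.simps)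
  moreover have "f (Suc 0) \<in> P" "f 0 < f (Suc 0)" using Suc.prems(2,3) by blast+
  ultimately have r: "rank_le P (\<lambda>u v. v < u) (f (Suc 0)) n" by blast
  have "\<forall>k. f (Suc k) \<in> P" using Suc.prems(2) by simp
  moreover have "\<forall>k. f (Suc k) < f (Suc (Suc k))" using Suc.prems(3) by simp
  ultimately show False using Suc.IH[of "\<lambda>k. f (Suc k)"] r by blast
qed

lemma ball_iff_trans:
  "(\<And>p. p \<in> S \<Longrightarrow> P p \<Longrightarrow> (A p \<longleftrightarrow> B p)) \<Longrightarrow>
   (\<forall>p\<in>S. P p \<longrightarrow> (A p \<longleftrightarrow> C p)) \<longleftrightarrow> (\<forall>p\<in>S. P p \<longrightarrow> (B p \<longleftrightarrow> C p))"
  by blast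

definition ht :: "'a set \<Rightarrow> nat" where "ht q = (LEAST n. rank_le Spec (\<subset>) q n)"
definition pt :: "(nat \<Rightarrow> 'a set) \<Rightarrow> 'a set set" where
  "pt f = {q. Fq q \<and> f (Suc (ht q)) \<subseteq> q}"

abbreviation cls :: "nat \<Rightarrow> 'a \<Rightarrow> 'a set" where "cls d c \<equiv> qrel (dL d) `` {c}"

lemma ht_rank: "Fq q \<Longrightarrow> rank_le Spec (\<subset>) q (ht q)"
  unfolding Fq_def ht_def by (blast intro: LeastI_ex)

lemma ht_le: "rank_le Spec (\<subset>) q n \<Longrightarrow> ht q \<le> n"
  unfolding ht_def by (rule Least_le)

lemma self_cls: "c \<in> cls d c"
  using QR by blast

lemma in_cls: "q \<in> Spec \<Longrightarrow> rank_le Spec (\<subset>) q n \<Longrightarrow> n < d \<Longrightarrow> v \<in> cls d c \<Longrightarrow> (v \<in> q \<longleftrightarrow> c \<in> q)"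
  using QR by blast

lemma class_sub: "q \<in> Spec \<Longrightarrow> rank_le Spec (\<subset>) q n \<Longrightarrow> n < d \<Longrightarrow> (cls d c \<subseteq> q \<longleftrightarrow> c \<in> q)"
  using in_cls self_cls by blast

lemma Lhat_cls:
  assumes "f \<in> Lhat" "1 \<le> d" shows "\<exists>c. f d = cls d c"
proof -
  have "f d \<in> UNIV // qrel (dL d)" using assms unfolding Lhat_def by blast
  then obtain x where "f d = qrel (dL d) `` {x}" by (rule quotientE)
  then show ?thesis by blast
qed

lemma Lhat0: "f \<in> Lhat \<Longrightarrow> f 0 = UNIV"
  unfolding Lhat_def by blast

lemma Lhat_chain:
  assumes f: "f \<in> Lhat" and d: "1 \<le> d'" "d' \<le> d"
  shows "f d \<subseteq> f d'"
  using d(2)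
proof (induction d rule: dec_induct)
  case base show ?case by simp
next
  case (step k)
  have "f (Suc k) \<subseteq> f k" using f d(1) step.hyps(1) unfolding Lhat_def by auto
  with step.IH show ?case by blast
qed

lemma ptd:
  assumes f: "f \<in> Lhat" and q: "Fq q" and d: "Suc (ht q) \<le> d"
  shows "f d \<subseteq> q \<longleftrightarrow> q \<in> pt f"
proof -
  have r: "rank_le Spec (\<subset>) q (ht q)" by (rule ht_rank[OF q])
  have qS: "q \<in> Spec" using q unfolding Fq_def by blast
  have d1: "1 \<le> d" using d by simp
  obtain c where c: "f d = cls d c" using Lhat_cls[OF f d1] by blast
  obtain c' where c': "f (Suc (ht q)) = cls (Suc (ht q)) c'" using Lhat_cls[OF f, of "Suc (ht q)"] by auto
  have "c \<in> f (Suc (ht q))" using Lhat_chain[OF f _ d] c self_cls by auto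
  then have "c \<in> q \<longleftrightarrow> c' \<in> q" using in_cls[OF qS r, of "Suc (ht q)"] c' by auto
  moreover have "f d \<subseteq> q \<longleftrightarrow> c \<in> q" using class_sub[OF qS r, of d] c d by auto
  moreover have "f (Suc (ht q)) \<subseteq> q \<longleftrightarrow> c' \<in> q" using class_sub[OF qS r, of "Suc (ht q)"] c' by auto
  ultimately show ?thesis unfolding pt_def using q by auto
qed

lemma hle_pt:
  assumes f: "f \<in> Lhat" and g: "g \<in> Lhat"
  shows "hle f g \<longleftrightarrow> pt f \<subseteq> pt g"
proof
  assume H: "hle f g"
  show "pt f \<subseteq> pt g"
  proof
    fix q assume "q \<in> pt f"
    then have q: "Fq q" and fq: "f (Suc (ht q)) \<subseteq> q" unfolding pt_def by auto
    define d where "d = Suc (ht q)"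
    have r: "rank_le Spec (\<subset>) q (ht q)" by (rule ht_rank[OF q])
    have qS: "q \<in> Spec" using q unfolding Fq_def by blast
    obtain c where c: "f d = cls d c" using Lhat_cls[OF f, of d] d_def by auto
    obtain c' where c': "g d = cls d c'" using Lhat_cls[OF g, of d] d_def by auto
    have d1: "1 \<le> d" unfolding d_def by simp
    have cf: "c \<in> f d" unfolding c by (rule self_cls)
    have cg: "c' \<in> g d" unfolding c' by (rule self_cls)
    have "(c, inf c c') \<in> qrel (dL d)" using H[unfolded hle_def, rule_format, OF d1 cf cg] .
    then have ic: "inf c c' \<in> cls d c" by simp
    have "c \<in> q" using fq cf unfolding d_def by blast
    moreover have "ht q < d" unfolding d_def by simp
    ultimately have "inf c c' \<in> q" using in_cls[OF qS r _ ic] by blast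
    then have "c' \<in> q" using pf_up[OF qS _ inf_le2] by blast
    then have "g d \<subseteq> q" using class_sub[OF qS r, of d] c' d_def by auto
    then show "q \<in> pt g" unfolding pt_def d_def using q by blast
  qed
next
  assume H: "pt f \<subseteq> pt g"
  show "hle f g" unfolding hle_def
  proof (intro allI impI ballI)
    fix d a b assume d: "1 \<le> d" and a: "a \<in> f d" and b: "b \<in> g d"
    show "(a, inf a b) \<in> qrel (dL d)" unfolding QR
    proof (intro ballI impI iffI)
      fix p assume p: "p \<in> Spec" "\<exists>n<d. rank_le Spec (\<subset>) p n" and ap: "a \<in> p"
      then obtain n where n: "n < d" "rank_le Spec (\<subset>) p n" by blast
      have Fp: "Fq p" unfolding Fq_def using p n by blast
      have hd': "Suc (ht p) \<le> d" using ht_le[OF n(2)] n(1) by simp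
      obtain c where c: "f d = cls d c" using Lhat_cls[OF f d] by blast
      have "c \<in> p" using in_cls[OF p(1) n(2) n(1)] a c ap by blast
      then have "f d \<subseteq> p" using class_sub[OF p(1) n(2) n(1)] c by blast
      then have "p \<in> pt f" using ptd[OF f Fp hd'] by blast
      then have "p \<in> pt g" using H by blast
      then have "g d \<subseteq> p" using ptd[OF g Fp hd'] by blast
      then have "b \<in> p" using b by blast
      then show "inf a b \<in> p" using pf_inf[OF p(1) ap] by blast
    next
      fix p assume p: "p \<in> Spec" and "inf a b \<in> p"
      then show "a \<in> p" using pf_up[OF p _ inf_le1] by blast
    qed
  qed
qed

lemma pt_hemb: "pt (hemb a) = {q. Fq q \<and> a \<in> q}"
proof -
  have "hemb a (Suc (ht q)) \<subseteq> q \<longleftrightarrow> a \<in> q" if q: "Fq q" for q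
  proof -
    have "q \<in> Spec" using q unfolding Fq_def by blast
    from class_sub[OF this ht_rank[OF q], of "Suc (ht q)" a] show ?thesis unfolding hemb_def by simp
  qed
  then show ?thesis unfolding pt_def by auto
qed

lemma qrel_mono: "(u, v) \<in> qrel (dL (Suc d)) \<Longrightarrow> ((u::'a), v) \<in> qrel (dL d)"
  unfolding QR by (meson less_SucI)

lemma hemb_Lhat: "hemb (a::'a) \<in> Lhat"
  unfolding Lhat_def
proof (intro CollectI conjI allI impI)
  show "hemb a 0 = UNIV" unfolding hemb_def by simp
next
  fix d :: nat assume d: "1 \<le> d"
  then show "hemb a d \<in> UNIV // qrel (dL d)" unfolding hemb_def by (auto intro: quotientI)
  show "hemb a (Suc d) \<subseteq> hemb a d" unfolding hemb_def using d qrel_mono by auto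
qed

lemma pt_Fq: "q \<in> pt f \<Longrightarrow> Fq q"
  unfolding pt_def by blast

lemma pt_inj:
  assumes f: "f \<in> Lhat" and g: "g \<in> Lhat" and e: "pt f = pt g"
  shows "f = g"
proof
  fix d
  show "f d = g d"
  proof (cases "d = 0")
    case True then show ?thesis using Lhat0[OF f] Lhat0[OF g] by simp
  next
    case False
    then have d: "1 \<le> d" by simp
    obtain c where c: "f d = cls d c" using Lhat_cls[OF f d] by blast
    obtain c' where c': "g d = cls d c'" using Lhat_cls[OF g d] by blast
    have same: "c \<in> p \<longleftrightarrow> c' \<in> p" if p: "p \<in> Spec" "\<exists>n<d. rank_le Spec (\<subset>) p n" for p
    proof -
      obtain n where n: "n < d" "rank_le Spec (\<subset>) p n" using p by blast
      have Fp: "Fq p" unfolding Fq_def using p n by blast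
      have hd': "Suc (ht p) \<le> d" using ht_le[OF n(2)] n(1) by simp
      have "c \<in> p \<longleftrightarrow> f d \<subseteq> p" using class_sub[OF p(1) n(2) n(1)] c by blast
      also have "\<dots> \<longleftrightarrow> p \<in> pt f" by (rule ptd[OF f Fp hd'])
      also have "\<dots> \<longleftrightarrow> g d \<subseteq> p" using ptd[OF g Fp hd'] e by blast
      also have "\<dots> \<longleftrightarrow> c' \<in> p" using class_sub[OF p(1) n(2) n(1)] c' by blast
      finally show ?thesis .
    qed
    have "cls d c = cls d c'"
    proof (intro set_eqI)
      fix v
      have "v \<in> cls d c \<longleftrightarrow> (c, v) \<in> qrel (dL d)" by (rule Image_singleton_iff)
      also have "\<dots> \<longleftrightarrow> (c', v) \<in> qrel (dL d)" unfolding QR by (rule ball_iff_trans[OF same])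
      also have "\<dots> \<longleftrightarrow> v \<in> cls d c'" by (rule Image_singleton_iff[symmetric])
      finally show "v \<in> cls d c \<longleftrightarrow> v \<in> cls d c'" .
    qed
    then show ?thesis by (simp only: c c')
  qed
qed

lemma pt_up:
  assumes f: "f \<in> Lhat" and q: "q \<in> pt f" and q': "Fq q'" and sub: "q \<subseteq> q'"
  shows "q' \<in> pt f"
proof -
  define d where "d = Suc (ht q + ht q')"
  have Fq: "Fq q" using q by (rule pt_Fq)
  have "f d \<subseteq> q" using ptd[OF f Fq, of d] q unfolding d_def by simp
  then have "f d \<subseteq> q'" using sub by blast
  then show ?thesis using ptd[OF f q', of d] unfolding d_def by simp
qed

lemma x_in: "p \<in> Spec \<Longrightarrow> (x \<in> p \<longleftrightarrow> \<not> p \<subseteq> U x)"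
  unfolding U_def using pf_up by blast

lemma g_in: "p \<in> Spec \<Longrightarrow> (g \<in> p \<longleftrightarrow> Up g \<subseteq> p)"
  unfolding Up_def using pf_up by blast


lemma cmi_hemb:
  assumes F: "Fq (U x)"
  shows "hemb x \<in> cmi Lhat hle"
proof -
  define q where "q = U x"
  have Fqq: "Fq q" using F q_def by simp
  have qS: "q \<in> Spec" using Fqq unfolding Fq_def by blast
  have xq: "x \<notin> q" unfolding q_def U_def by simp
  have pth: "pt (hemb x) = {p. Fq p \<and> x \<in> p}" by (rule pt_hemb)
  have qnot: "q \<notin> pt (hemb x)" using pth xq by blast
  show ?thesis unfolding cmi_def
  proof (intro CollectI conjI allI impI)
    show "hemb x \<in> Lhat" by (rule hemb_Lhat)
    have "q \<in> pt (hemb top)" using pt_hemb[of top] Fqq pf_top[OF qS] by blast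
    then have "\<not> hle (hemb top) (hemb x)" using hle_pt[OF hemb_Lhat hemb_Lhat] qnot by blast
    then show "\<exists>y\<in>Lhat. \<not> hle y (hemb x)" using hemb_Lhat by blast
  next
    fix A m assume AL: "A \<subseteq> Lhat" and im: "is_inf_in Lhat hle A m" and mx: "hle m (hemb x)"
    have mL: "m \<in> Lhat" using im unfolding is_inf_in_def by blast
    show "\<exists>a\<in>A. hle a (hemb x)"
    proof (rule ccontr)
      assume nH: "\<not> ?thesis"
      obtain g where g: "Up g = q" using lemC'[OF Fqq] by blast
      have ptg: "pt (hemb g) = {p. Fq p \<and> q \<subseteq> p}" using pt_hemb[of g] g g_in unfolding Fq_def by blast
      have "hle (hemb g) a" if aA: "a \<in> A" for a
      proof -
        have aL: "a \<in> Lhat" using aA AL by blast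
        have "\<not> pt a \<subseteq> pt (hemb x)" using nH aA hle_pt[OF aL hemb_Lhat] by blast
        then obtain p where p: "p \<in> pt a" "p \<notin> pt (hemb x)" by blast
        have Fp: "Fq p" using p(1) by (rule pt_Fq)
        then have "x \<notin> p" using p(2) pth by blast
        then have "p \<subseteq> q" using x_in[of p x] Fp unfolding Fq_def q_def by blast
        then have "q \<in> pt a" using pt_up[OF aL p(1) Fqq] by blast
        then have "pt (hemb g) \<subseteq> pt a" using ptg pt_up[OF aL] by blast
        then show ?thesis using hle_pt[OF hemb_Lhat aL] by blast
      qed
      then have "hle (hemb g) m" using im hemb_Lhat unfolding is_inf_in_def by blast
      then have "pt (hemb g) \<subseteq> pt m" using hle_pt[OF hemb_Lhat mL] by blast
      moreover have "pt m \<subseteq> pt (hemb x)" using mx hle_pt[OF mL hemb_Lhat] by blast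
      moreover have "q \<in> pt (hemb g)" using ptg Fqq by blast
      ultimately show False using qnot by blast
    qed
  qed
qed

lemma cmi_Lhat:
  assumes xi: "\<xi> \<in> cmi Lhat hle"
  shows "\<exists>x. Fq (U x) \<and> \<xi> = hemb x"
proof -
  have xiL: "\<xi> \<in> Lhat" and
    c: "\<And>A m. A \<subseteq> Lhat \<Longrightarrow> is_inf_in Lhat hle A m \<Longrightarrow> hle m \<xi> \<Longrightarrow> \<exists>a\<in>A. hle a \<xi>"
    using xi unfolding cmi_def by blast+
  define A where "A = {hemb x |x. Fq (U x) \<and> U x \<notin> pt \<xi>}"
  have AL: "A \<subseteq> Lhat" unfolding A_def using hemb_Lhat by blast
  have lb: "pt \<xi> \<subseteq> pt (hemb x)" if "Fq (U x)" "U x \<notin> pt \<xi>" for x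
  proof
    fix p assume p: "p \<in> pt \<xi>"
    have Fp: "Fq p" using p by (rule pt_Fq)
    have "x \<in> p"
    proof (rule ccontr)
      assume "x \<notin> p"
      then have "p \<subseteq> U x" using x_in[of p x] Fp unfolding Fq_def by blast
      then have "U x \<in> pt \<xi>" using pt_up[OF xiL p that(1)] by blast
      with that(2) show False by blast
    qed
    then show "p \<in> pt (hemb x)" using pt_hemb Fp by blast
  qed
  have "is_inf_in Lhat hle A \<xi>" unfolding is_inf_in_def
  proof (intro conjI ballI impI)
    show "\<xi> \<in> Lhat" by (rule xiL)
  next
    fix a assume "a \<in> A"
    then obtain x where x: "a = hemb x" "Fq (U x)" "U x \<notin> pt \<xi>" unfolding A_def by blast
    then show "hle \<xi> a" using lb[OF x(2,3)] hle_pt[OF xiL hemb_Lhat] by blast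
  next
    fix z assume zL: "z \<in> Lhat" and H: "\<forall>a\<in>A. hle z a"
    have "pt z \<subseteq> pt \<xi>"
    proof
      fix p assume p: "p \<in> pt z"
      have Fp: "Fq p" using p by (rule pt_Fq)
      show "p \<in> pt \<xi>"
      proof (rule ccontr)
        assume pn: "p \<notin> pt \<xi>"
        obtain x where x: "U x = p" using lemB'[OF Fp] by blast
        have "hemb x \<in> A" unfolding A_def using x Fp pn by blast
        then have "hle z (hemb x)" using H by blast
        then have "p \<in> pt (hemb x)" using p hle_pt[OF zL hemb_Lhat] by blast
        then have "x \<in> p" using pt_hemb by blast
        with x show False unfolding U_def by blast
      qed
    qed
    then show "hle z \<xi>" using hle_pt[OF zL xiL] by blast
  qed
  moreover have "hle \<xi> \<xi>" using hle_pt[OF xiL xiL] by blast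
  ultimately obtain a where "a \<in> A" "hle a \<xi>" using c[OF AL] by blast
  then obtain x where x: "a = hemb x" "Fq (U x)" "U x \<notin> pt \<xi>" and ax: "hle (hemb x) \<xi>"
    unfolding A_def by blast
  have "pt (hemb x) \<subseteq> pt \<xi>" using ax hle_pt[OF hemb_Lhat xiL] by blast
  with lb[OF x(2,3)] have "pt \<xi> = pt (hemb x)" by blast
  then have "\<xi> = hemb x" by (rule pt_inj[OF xiL hemb_Lhat])
  with x show ?thesis by blast
qed

lemma part1: "cmi Lhat hle = hemb ` cmi (UNIV::'a set) (\<le>)"
proof
  show "cmi Lhat hle \<subseteq> hemb ` cmi (UNIV::'a set) (\<le>)"
    using cmi_Lhat M_char by blast
  show "hemb ` cmi (UNIV::'a set) (\<le>) \<subseteq> cmi Lhat hle"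
    using cmi_hemb M_char by blast
qed


lemma vee_in:
  assumes "x \<in> cmi (UNIV::'a set) (\<le>)"
  shows "\<exists>g. Up g = U x \<and> vee_map x = g \<and> g \<in> cji (UNIV::'a set) (\<le>) \<and> wedge_map g = x"
proof -
  have F: "Fq (U x)" using assms M_char by blast
  obtain g where g: "Up g = U x" using lemC'[OF F] by blast
  have "g \<in> cji (UNIV::'a set) (\<le>)" using J_char g F by simp
  with g vee_eq[OF g] wedge_eq[OF g] show ?thesis by blast
qed

lemma wedge_in:
  assumes "g \<in> cji (UNIV::'a set) (\<le>)"
  shows "\<exists>x. Up g = U x \<and> wedge_map g = x \<and> x \<in> cmi (UNIV::'a set) (\<le>) \<and> vee_map x = g"
proof -
  have F: "Fq (Up g)" using assms J_char by blast
  obtain x where x: "U x = Up g" using lemB'[OF F] by blast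
  have "x \<in> cmi (UNIV::'a set) (\<le>)" using M_char x F by simp
  with x vee_eq[OF x[symmetric]] wedge_eq[OF x[symmetric]] show ?thesis by blast
qed

lemma main:
  defines "M \<equiv> cmi (UNIV::'a set) (\<le>)" and "J \<equiv> cji (UNIV::'a set) (\<le>)"
  shows
    "cmi Lhat hle = (hemb ` M :: (nat \<Rightarrow> 'a set) set)
     \<and> ((\<forall>x\<in>M. \<exists>m. is_inf_in UNIV (\<le>) {y. \<not> y \<le> x} m)
     \<and> (\<forall>x\<in>J. \<exists>m. is_sup_in UNIV (\<le>) {y. \<not> x \<le> y} m)
     \<and> bij_betw vee_map M J \<and> bij_betw wedge_map J M
     \<and> (\<forall>x\<in>M. wedge_map (vee_map x) = x) \<and> (\<forall>x\<in>J. vee_map (wedge_map x) = x)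
     \<and> (\<forall>x\<in>M. \<forall>y\<in>M. x \<le> y \<longrightarrow> vee_map x \<le> vee_map y)
     \<and> (\<forall>x\<in>J. \<forall>y\<in>J. x \<le> y \<longrightarrow> wedge_map x \<le> wedge_map y))
     \<and> (\<forall>x\<in>M. finite_cofoundation_rank M (<) x)
     \<and> \<not> (\<exists>f::nat \<Rightarrow> 'a. (\<forall>n. f n \<in> M) \<and> (\<forall>n. f n < f (Suc n)))
     \<and> (\<forall>a::'a. is_inf_in UNIV (\<le>) {x\<in>M. a \<le> x} a)"
proof -
  have p1: "cmi Lhat hle = (hemb ` M :: (nat \<Rightarrow> 'a set) set)" unfolding M_def by (rule part1)
  have p2a: "\<forall>x\<in>M. \<exists>m. is_inf_in UNIV (\<le>) {y. \<not> y \<le> x} m"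
  proof
    fix x assume "x \<in> M"
    then obtain g where "Up g = U x" using vee_in unfolding M_def by blast
    then show "\<exists>m. is_inf_in UNIV (\<le>) {y. \<not> y \<le> x} m" using vee_is by blast
  qed
  have p2b: "\<forall>x\<in>J. \<exists>m. is_sup_in UNIV (\<le>) {y. \<not> x \<le> y} m"
  proof
    fix g assume "g \<in> J"
    then obtain x where "Up g = U x" using wedge_in unfolding J_def by blast
    then show "\<exists>m. is_sup_in UNIV (\<le>) {y. \<not> g \<le> y} m" using wedge_is by blast
  qed
  have inv1: "\<forall>x\<in>M. wedge_map (vee_map x) = x" using vee_in unfolding M_def by metis
  have inv2: "\<forall>x\<in>J. vee_map (wedge_map x) = x" using wedge_in unfolding J_def by metis
  have im1: "vee_map ` M \<subseteq> J" using vee_in unfolding M_def J_def by blast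
  have im2: "wedge_map ` J \<subseteq> M" using wedge_in unfolding M_def J_def by blast
  have b1: "bij_betw vee_map M J" using inv1 inv2 im1 im2 by (intro bij_betw_byWitness[where f'=wedge_map]) auto
  have b2: "bij_betw wedge_map J M" using inv1 inv2 im1 im2 by (intro bij_betw_byWitness[where f'=vee_map]) auto
  have mono1: "\<forall>x\<in>M. \<forall>y\<in>M. x \<le> y \<longrightarrow> vee_map x \<le> vee_map y"
  proof (intro ballI impI)
    fix x y assume x: "x \<in> M" and y: "y \<in> M" and xy: "x \<le> y"
    obtain g where g: "Up g = U x" "vee_map x = g" using vee_in x unfolding M_def by blast
    obtain g' where g': "Up g' = U y" "vee_map y = g'" using vee_in y unfolding M_def by blast
    have "U y \<subseteq> U x" unfolding U_def using xy order_trans by blast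
    moreover have "g' \<in> Up g'" unfolding Up_def by simp
    ultimately have "g' \<in> Up g" using g g' by blast
    then have "g \<le> g'" unfolding Up_def by simp
    then show "vee_map x \<le> vee_map y" using g(2) g'(2) by simp
  qed
  have mono2: "\<forall>x\<in>J. \<forall>y\<in>J. x \<le> y \<longrightarrow> wedge_map x \<le> wedge_map y"
  proof (intro ballI impI)
    fix g g' assume g: "g \<in> J" and g': "g' \<in> J" and gg: "g \<le> g'"
    obtain x where x: "Up g = U x" "wedge_map g = x" using wedge_in g unfolding J_def by blast
    obtain x' where x': "Up g' = U x'" "wedge_map g' = x'" using wedge_in g' unfolding J_def by blast
    have "Up g' \<subseteq> Up g" unfolding Up_def using gg order_trans by blast
    then have "U x' \<subseteq> U x" using x x' by simp
    moreover have "x \<notin> U x" unfolding U_def by simp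
    ultimately have "x \<notin> U x'" by blast
    then have "x \<le> x'" unfolding U_def by simp
    then show "wedge_map g \<le> wedge_map g'" using x(2) x'(2) by simp
  qed
  have p3: "\<forall>x\<in>M. finite_cofoundation_rank M (<) x"
  proof
    fix x assume "x \<in> M"
    then have "Fq (U x)" using M_char unfolding M_def by blast
    then obtain n where "rank_le Spec (\<subset>) (U x) n" unfolding Fq_def by blast
    then have "rank_le M (\<lambda>u v. v < u) x n" unfolding M_def by (rule rk3)
    then show "finite_cofoundation_rank M (<) x"
      unfolding finite_cofoundation_rank_def finite_foundation_rank_def by blast
  qed
  have p4: "\<not> (\<exists>f::nat \<Rightarrow> 'a. (\<forall>n. f n \<in> M) \<and> (\<forall>n. f n < f (Suc n)))"
  proof
    assume "\<exists>f::nat \<Rightarrow> 'a. (\<forall>n. f n \<in> M) \<and> (\<forall>n. f n < f (Suc n))"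
    then obtain f :: "nat \<Rightarrow> 'a" where f: "\<forall>n. f n \<in> M" "\<forall>n. f n < f (Suc n)" by blast
    then have "finite_cofoundation_rank M (<) (f 0)" using p3 by blast
    then obtain n where "rank_le M (\<lambda>u v. v < u) (f 0) n"
      unfolding finite_cofoundation_rank_def finite_foundation_rank_def by blast
    from no_chain[OF this f] show False .
  qed
  have p5: "\<forall>a::'a. is_inf_in UNIV (\<le>) {x\<in>M. a \<le> x} a"
  proof
    fix a :: 'a
    have "{x\<in>M. a \<le> x} = {x. Fq (U x) \<and> a \<le> x}" unfolding M_def using M_char by blast
    then show "is_inf_in UNIV (\<le>) {x\<in>M. a \<le> x} a" using inf5[of a] by simp
  qed
  show ?thesis using p1 p2a p2b b1 b2 inv1 inv2 mono1 mono2 p3 p4 p5 by blast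
qed

end

theorem proposition6p7:
  fixes L :: "'a::{distrib_lattice,bounded_lattice} itself"
  assumes "coheyting L" and "precompact L" and "hausdorff L"
  defines "M \<equiv> cmi (UNIV::'a set) (\<le>)" and "J \<equiv> cji (UNIV::'a set) (\<le>)"
  shows
    "cmi Lhat hle = (hemb ` M :: (nat \<Rightarrow> 'a set) set)
     \<and> ((\<forall>x\<in>M. \<exists>m. is_inf_in UNIV (\<le>) {y. \<not> y \<le> x} m)
     \<and> (\<forall>x\<in>J. \<exists>m. is_sup_in UNIV (\<le>) {y. \<not> x \<le> y} m)
     \<and> bij_betw vee_map M J \<and> bij_betw wedge_map J M
     \<and> (\<forall>x\<in>M. wedge_map (vee_map x) = x) \<and> (\<forall>x\<in>J. vee_map (wedge_map x) = x)
     \<and> (\<forall>x\<in>M. \<forall>y\<in>M. x \<le> y \<longrightarrow> vee_map x \<le> vee_map y)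
     \<and> (\<forall>x\<in>J. \<forall>y\<in>J. x \<le> y \<longrightarrow> wedge_map x \<le> wedge_map y))
     \<and> (\<forall>x\<in>M. finite_cofoundation_rank M (<) x)
     \<and> \<not> (\<exists>f::nat \<Rightarrow> 'a. (\<forall>n. f n \<in> M) \<and> (\<forall>n. f n < f (Suc n)))
     \<and> (\<forall>a::'a. is_inf_in UNIV (\<le>) {x\<in>M. a \<le> x} a)"
proof -
  interpret cha L using assms(1-3) by unfold_locales
  show ?thesis unfolding M_def J_def by (rule main)
qed

end
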